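(* Let $M=\frac{1}{3^{2/3}-2}$. Let the open intervals $J_n^k\subset[0,M]$ ($n\ge 1$, $1\le k\le 2^{n-1}$) be constructed as follows: $J_1^1$ is the open interval of length $3^{-2/3}$ centered at the midpoint of $[0,M]$; for $n\ge 2$, the intervals $J_n^1,\dots,J_n^{2^{n-1}}$ are the open intervals of length $(3^{2/3})^{-n}$ centered at the midpoints of the $2^{n-1}$ connected components of $[0,M]\setminus(J_1\cup\dots\cup J_{n-1})$, where $J_m=\bigcup_{k=1}^{2^{m-1}}J_m^k$. Let $A=[0,M]\setminus\bigcup_{n\ge1}J_n$. Define $g:[0,M]\to\mathbb{R}$ by $g=0$ on $A$ and $g(x)=\frac{4}{\mathcal{L}(J_n^k)^{1/2}}\mathrm{dist}(x,\partial J_n^k)$ for $x\in J_n^k$, define $f(x)=\int_0^x g(t)\,dt$ for $x\in[0,M]$, and define $F:[0,M]^2\to[0,2]$ by $F(x,y)=f(x)+f(y)$. Then $F$ is a $C^{1,\frac12}$ function (i.e. $C^1$ with $\tfrac12$-Hölder continuous derivatives) and every $t\in[0,2]$ is a critical value of $F$, i.e. there exists $(x,y)\in[0,M]^2$ with $F(x,y)=t$ and $\nabla F(x,y)=(0,0)$.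
   Context: $\mathcal{L}$ denotes Lebesgue measure (length); $\partial J$ is the set of endpoints of an interval $J$. *)

theory Defs
  imports "HOL-Analysis.Analysis"
begin

definition lam :: real where "lam = 3 powr (2/3)"
definition M :: real where "M = 1 / (lam - 2)"

definition intervals_after :: "real set \<Rightarrow> nat \<Rightarrow> real set set" where
  "intervals_after R n =
     (\<lambda>C. ball ((Inf C + Sup C) / 2) (1 / (2 * lam ^ n))) ` components ({0..M} - R)"

fun removed :: "nat \<Rightarrow> real set" where
  "removed 0 = {}"
| "removed (Suc n) = removed n \<union> \<Union>(intervals_after (removed n) (Suc n))"

definition Jfam :: "nat \<Rightarrow> real set set" where
  "Jfam n = intervals_after (removed (n - 1)) n"

definition allJ :: "real set set" where
  "allJ = (\<Union>n\<in>{1..}. Jfam n)"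

definition Aset :: "real set" where
  "Aset = {0..M} - \<Union>allJ"

definition g :: "real \<Rightarrow> real" where
  "g x = (if \<exists>J\<in>allJ. x \<in> J
          then (let J = (SOME J. J \<in> allJ \<and> x \<in> J)
                in 4 / sqrt (measure lebesgue J) * infdist x (frontier J))
          else 0)"

definition f :: "real \<Rightarrow> real" where
  "f x = integral {0..x} g"

definition F :: "real \<times> real \<Rightarrow> real" where
  "F p = f (fst p) + f (snd p)"

end

theory Submission imports Defs begin

lemma meas_ball: "r > 0 \<Longrightarrow> measure lebesgue (ball (c::real) r) = 2*r"
  unfolding ball_eq_greaterThanLessThan
  by (subst measure_completion) auto
lemma sphere_real: "r > 0 \<Longrightarrow> sphere (c::real) r = {c-r,c+r}"
  by (auto simp: sphere_def dist_real_def)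
lemma infdist2: "infdist (x::real) {a,b} = min (dist x a) (dist x b)"
  by (simp add: infdist_def cInf_insert inf_min)

lemma lam_pos: "lam > 0" unfolding lam_def by simp
lemma lam3: "lam^3 = 9"
proof -
  have "lam ^ 3 = lam powr (3::real)" using powr_realpow[OF lam_pos, of 3] by simp
  also have "\<dots> = 3 powr (2/3 * 3)" unfolding lam_def by (simp add: powr_powr)
  also have "\<dots> = 3 powr (2::real)" by simp
  also have "\<dots> = 9" using powr_realpow[of 3 2] by simp
  finally show ?thesis .
qed
lemma lam_gt2: "lam > 2"
proof (rule ccontr)
  assume "\<not> lam > 2"
  then have "lam^3 \<le> 2^3" using lam_pos by (intro power_mono) auto
  then show False using lam3 by simp
qed
lemma M_pos: "M > 0" unfolding M_def using lam_gt2 by simp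
lemma M_eq: "M * (lam - 2) = 1" unfolding M_def using lam_gt2 by simp

lemma sqrt_lam_pow: "sqrt (lam^k) ^ 3 = 3^k"
proof -
  have L0: "0 \<le> lam^k" by (rule zero_le_power) (use lam_pos in linarith)
  have "(sqrt (lam^k) ^ 3)^2 = (sqrt (lam^k) ^ 2)^3"
    by (metis power_mult mult.commute)
  also have "\<dots> = (lam^k)^3"
  proof -
    have "sqrt (lam^k) ^ 2 = lam^k" by (rule real_sqrt_pow2) (rule L0)
    then show ?thesis by simp
  qed
  also have "\<dots> = (lam^3)^k" by (simp add: power_mult[symmetric] mult.commute)
  also have "\<dots> = (3^k)^2" by (simp add: lam3 power2_eq_square power_mult_distrib[symmetric])
  finally have "(sqrt (lam^k) ^ 3)^2 = ((3::real)^k)^2" .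
  then show ?thesis
  proof (rule power2_eq_imp_eq)
    show "0 \<le> sqrt (lam^k) ^ 3" by (intro zero_le_power real_sqrt_ge_zero L0)
  qed simp
qed

definition ell :: "nat \<Rightarrow> real" where "ell n = M / lam^n"
definition rad :: "nat \<Rightarrow> real" where "rad n = 1 / (2 * lam^n)"

lemma ell_pos: "ell n > 0" unfolding ell_def using M_pos lam_pos by simp
lemma rad_pos: "rad n > 0" unfolding rad_def using lam_pos by simp
lemma ell_rec: "ell n = 2 * ell (Suc n) + 2 * rad (Suc n)"
proof -
  have L: "lam^n > 0" using lam_pos by simp
  have "2 * ell (Suc n) + 2 * rad (Suc n) = (2*M + 1) / (lam * lam^n)"
    unfolding ell_def rad_def using L lam_pos by (simp add: field_simps)
  also have "2*M+1 = M * lam" using M_eq by (simp add: algebra_simps)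
  finally show ?thesis unfolding ell_def using L lam_pos by simp
qed

fun P :: "nat \<Rightarrow> real set" where
  "P 0 = {0}"
| "P (Suc n) = P n \<union> (\<lambda>a. a + ell n - ell (Suc n)) ` P n"

lemma components_intervals:
  fixes Q :: "real set" and l :: real
  assumes fin: "finite Q" and l: "l \<ge> 0"
    and sep: "\<And>a b. a \<in> Q \<Longrightarrow> b \<in> Q \<Longrightarrow> a \<noteq> b \<Longrightarrow> l < \<bar>a - b\<bar>"
  shows "components (\<Union>a\<in>Q. {a..a+l}) = (\<lambda>a. {a..a+l}) ` Q"
proof -
  define S where "S = (\<Union>a\<in>Q. {a..a+l})"
  have comp: "{a..a+l} \<in> components S" if aQ: "a \<in> Q" for a
    unfolding in_components_maximal
  proof (intro conjI allI impI)
    show "{a..a+l} \<noteq> {}" using l by simp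
    show "{a..a+l} \<subseteq> S" unfolding S_def using aQ by (rule UN_upper)
    show "connected {a..a+l}" by simp
    fix D assume D: "D \<noteq> {} \<and> {a..a+l} \<subseteq> D \<and> D \<subseteq> S \<and> connected D"
    from D have D2: "{a..a+l} \<subseteq> D" by simp
    from D have D3: "D \<subseteq> S" by simp
    from D have conn: "connected D" by simp
    define E where "E = (\<Union>b\<in>Q-{a}. {b..b+l})"
    have cE: "closed E" unfolding E_def using fin by (intro closed_UN) auto
    have cA: "closed {a..a+l}" by simp
    have disj: "x \<notin> E" if x: "x \<in> {a..a+l}" for x
    proof
      assume "x \<in> E"
      then obtain b where b: "b \<in> Q - {a}" "x \<in> {b..b+l}" unfolding E_def by (rule UN_E)
      have "l < \<bar>a - b\<bar>" using sep[OF aQ] b(1) by auto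
      then have "l < a - b \<or> l < b - a" by arith
      moreover have "a \<le> x" "x \<le> a + l" "b \<le> x" "x \<le> b + l" using x b(2) by auto
      ultimately show False by linarith
    qed
    have DS: "D \<subseteq> {a..a+l} \<union> E"
    proof
      fix x assume "x \<in> D"
      then have "x \<in> S" by (rule subsetD[OF D3])
      then obtain b where b: "b \<in> Q" "x \<in> {b..b+l}" unfolding S_def by (rule UN_E)
      show "x \<in> {a..a+l} \<union> E"
      proof (cases "b = a")
        case True then show ?thesis using b by simp
      next
        case False
        then have "b \<in> Q - {a}" using b by simp
        then have "x \<in> E" unfolding E_def using b(2) by (rule UN_I)
        then show ?thesis by simp
      qed
    qed
    have ABD: "{a..a+l} \<inter> E \<inter> D = {}" using disj by auto
    have aD: "a \<in> D" using D2 l by auto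
    have "{a..a+l} \<inter> D = {} \<or> E \<inter> D = {}"
      by (rule connected_closedD[OF conn ABD DS cA cE])
    moreover have "{a..a+l} \<inter> D \<noteq> {}"
    proof -
      have "a \<in> {a..a+l} \<inter> D" using aD l by simp
      then show ?thesis by (metis empty_iff)
    qed
    ultimately have ED: "E \<inter> D = {}" by simp
    show "D = {a..a+l}"
    proof
      show "{a..a+l} \<subseteq> D" by (rule D2)
      show "D \<subseteq> {a..a+l}"
      proof
        fix x assume x: "x \<in> D"
        then have "x \<notin> E" using ED by auto
        then show "x \<in> {a..a+l}" using DS x by auto
      qed
    qed
  qed
  show ?thesis unfolding S_def[symmetric]
  proof
    show "(\<lambda>a. {a..a+l}) ` Q \<subseteq> components S" using comp by auto
    show "components S \<subseteq> (\<lambda>a. {a..a+l}) ` Q"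
    proof
      fix C assume C: "C \<in> components S"
      then obtain x where xC: "x \<in> C" using in_components_nonempty by fastforce
      have "C \<subseteq> S" using C by (rule in_components_subset)
      then have "x \<in> S" using xC by auto
      then obtain a where a: "a \<in> Q" "x \<in> {a..a+l}" unfolding S_def by (rule UN_E)
      have "C \<inter> {a..a+l} \<noteq> {}" using xC a(2) by auto
      then have "C = {a..a+l}" using components_eq[OF C comp[OF a(1)]] by simp
      moreover have "{a..a+l} \<in> (\<lambda>a. {a..a+l}) ` Q" using a(1) by (rule imageI)
      ultimately show "C \<in> (\<lambda>a. {a..a+l}) ` Q" by simp
    qed
  qed
qed

definition inv :: "nat \<Rightarrow> bool" where
  "inv n \<longleftrightarrow> finite (P n) \<and> (\<forall>a\<in>P n. 0 \<le> a \<and> a + ell n \<le> M) \<and>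
     (\<forall>a\<in>P n. \<forall>b\<in>P n. a \<noteq> b \<longrightarrow> ell n < \<bar>a - b\<bar>) \<and>
     {0..M} - removed n = (\<Union>a\<in>P n. {a..a+ell n})"

lemma IA_lemma:
  assumes "inv n"
  shows "intervals_after (removed n) (Suc n) = (\<lambda>a. ball (a + ell n / 2) (rad (Suc n))) ` P n"
proof -
  have comps: "components ({0..M} - removed n) = (\<lambda>a. {a..a+ell n}) ` P n"
  proof -
    have "{0..M} - removed n = (\<Union>a\<in>P n. {a..a+ell n})" using assms unfolding inv_def by blast
    moreover have "components (\<Union>a\<in>P n. {a..a+ell n}) = (\<lambda>a. {a..a+ell n}) ` P n"
    proof (rule components_intervals)
      show "finite (P n)" using assms unfolding inv_def by blast
      show "0 \<le> ell n" using ell_pos[of n] by simp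
      fix a b assume "a \<in> P n" "b \<in> P n" "a \<noteq> b"
      then show "ell n < \<bar>a - b\<bar>" using assms unfolding inv_def by blast
    qed
    ultimately show ?thesis by simp
  qed
  have e: "(Inf {a..a+ell n} + Sup {a..a+ell n}) / 2 = a + ell n / 2" for a
    using ell_pos[of n] by simp
  show ?thesis
    unfolding intervals_after_def comps image_image e
    by (simp add: rad_def)
qed

lemma in_ball_real: "x \<in> ball (c::real) r \<longleftrightarrow> c - r < x \<and> x < c + r"
  by (auto simp: dist_real_def)

lemma inv_all: "inv n"
proof (induction n)
  case 0
  show ?case unfolding inv_def by (auto simp: ell_def)
next
  case (Suc n)
  let ?l = "ell n" and ?l' = "ell (Suc n)" and ?r = "rad (Suc n)"
  have rec: "?l = 2 * ?l' + 2 * ?r" by (rule ell_rec)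
  have rp: "?r > 0" by (rule rad_pos)
  have lp': "?l' > 0" by (rule ell_pos)
  have fin: "finite (P n)" and bnd: "\<And>a. a \<in> P n \<Longrightarrow> 0 \<le> a \<and> a + ?l \<le> M"
    and sep: "\<And>a b. a\<in>P n \<Longrightarrow> b\<in>P n \<Longrightarrow> a \<noteq> b \<Longrightarrow> ?l < \<bar>a - b\<bar>"
    and eq: "{0..M} - removed n = (\<Union>a\<in>P n. {a..a+?l})"
    using Suc.IH unfolding inv_def by auto
  have rem: "removed (Suc n) = removed n \<union> (\<Union>a\<in>P n. ball (a + ?l/2) ?r)"
    using IA_lemma[OF Suc.IH] by simp
  have m1: "a + ?l/2 - ?r = a + ?l'" for a using rec by linarith
  have m2: "a + ?l/2 + ?r = a + ?l - ?l'" for a using rec by linarith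
  have lt: "?l' \<le> ?l - ?l'" using rec rp by linarith
  have key: "{a..a+?l} - (\<Union>b\<in>P n. ball (b + ?l/2) ?r) = {a..a+?l'} \<union> {a+?l-?l'..a+?l}"
    if aP: "a \<in> P n" for a
  proof (intro set_eqI iffI)
    fix x assume x: "x \<in> {a..a+?l} - (\<Union>b\<in>P n. ball (b + ?l/2) ?r)"
    then have "x \<notin> ball (a + ?l/2) ?r" using aP by blast
    then have "x \<le> a + ?l/2 - ?r \<or> x \<ge> a + ?l/2 + ?r" unfolding in_ball_real by auto
    then have "x \<le> a + ?l' \<or> x \<ge> a + ?l - ?l'" unfolding m1 m2 .
    then show "x \<in> {a..a+?l'} \<union> {a+?l-?l'..a+?l}" using x by auto
  next
    fix x assume x: "x \<in> {a..a+?l'} \<union> {a+?l-?l'..a+?l}"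
    have xa1: "a \<le> x" "x \<le> a + ?l" using x lt lp' by auto
    have xa2: "x \<le> a + ?l/2 - ?r \<or> x \<ge> a + ?l/2 + ?r" unfolding m1 m2 using x by auto
    have xa: "x \<in> {a..a+?l}" using xa1 by auto
    have "x \<notin> ball (b + ?l/2) ?r" if bP: "b \<in> P n" for b
    proof (cases "b = a")
      case True
      then show ?thesis using xa2 unfolding in_ball_real by auto
    next
      case False
      have "?l < \<bar>a - b\<bar>" using sep[OF aP bP] False by auto
      then have ab: "?l < a - b \<or> ?l < b - a" by arith
      show ?thesis
      proof
        assume "x \<in> ball (b + ?l/2) ?r"
        then have "b + ?l/2 - ?r < x" "x < b + ?l/2 + ?r" unfolding in_ball_real by auto
        then show False using ab xa1 rec rp lp' by linarith
      qed
    qed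
    then show "x \<in> {a..a+?l} - (\<Union>b\<in>P n. ball (b + ?l/2) ?r)" using xa by blast
  qed
  have eq': "{0..M} - removed (Suc n) = (\<Union>a\<in>P (Suc n). {a..a+?l'})"
  proof -
    have "{0..M} - removed (Suc n) = ({0..M} - removed n) - (\<Union>b\<in>P n. ball (b + ?l/2) ?r)"
      using rem by blast
    also have "\<dots> = (\<Union>a\<in>P n. {a..a+?l} - (\<Union>b\<in>P n. ball (b + ?l/2) ?r))"
      unfolding eq by blast
    also have "\<dots> = (\<Union>a\<in>P n. {a..a+?l'} \<union> {a+?l-?l'..a+?l})"
      by (rule SUP_cong[OF refl key])
    also have "\<dots> = (\<Union>a\<in>P (Suc n). {a..a+?l'})"
    proof (intro set_eqI iffI)
      fix x assume "x \<in> (\<Union>a\<in>P n. {a..a+?l'} \<union> {a+?l-?l'..a+?l})"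
      then obtain a where a: "a \<in> P n" "x \<in> {a..a+?l'} \<or> x \<in> {a+?l-?l'..a+?l}" by blast
      show "x \<in> (\<Union>a\<in>P (Suc n). {a..a+?l'})"
      proof (cases "x \<in> {a..a+?l'}")
        case True
        then show ?thesis using a(1) by auto
      next
        case False
        then have "x \<in> {(a+?l-?l')..(a+?l-?l')+?l'}" using a(2) by auto
        moreover have "a+?l-?l' \<in> P (Suc n)" using a(1) by simp
        ultimately show ?thesis by blast
      qed
    next
      fix x assume "x \<in> (\<Union>a\<in>P (Suc n). {a..a+?l'})"
      then obtain u where u: "u \<in> P (Suc n)" "x \<in> {u..u+?l'}" by blast
      from u(1) have "u \<in> P n \<or> (\<exists>a\<in>P n. u = a + ?l - ?l')" by auto
      then show "x \<in> (\<Union>a\<in>P n. {a..a+?l'} \<union> {a+?l-?l'..a+?l})"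
      proof
        assume "u \<in> P n" then show ?thesis using u(2) by blast
      next
        assume "\<exists>a\<in>P n. u = a + ?l - ?l'"
        then obtain a where "a \<in> P n" "u = a + ?l - ?l'" by blast
        then show ?thesis using u(2) by auto
      qed
    qed
    finally show ?thesis .
  qed
  have par: "\<exists>a\<in>P n. a \<le> u \<and> u + ?l' \<le> a + ?l \<and> (u = a \<or> u = a + ?l - ?l')"
    if "u \<in> P (Suc n)" for u
  proof -
    from that have "u \<in> P n \<or> (\<exists>a\<in>P n. u = a + ?l - ?l')" by auto
    then show ?thesis
    proof
      assume "u \<in> P n" then show ?thesis using lt lp' by (intro bexI[of _ u]) auto
    next
      assume "\<exists>a\<in>P n. u = a + ?l - ?l'"
      then obtain a where a: "a \<in> P n" "u = a + ?l - ?l'" by blast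
      show ?thesis using a lt lp' by (intro bexI[of _ a]) auto
    qed
  qed
  have sep': "?l' < \<bar>u - v\<bar>" if u: "u \<in> P (Suc n)" and v: "v \<in> P (Suc n)" and uv: "u \<noteq> v" for u v
  proof -
    obtain a where a: "a \<in> P n" "a \<le> u" "u + ?l' \<le> a + ?l" "u = a \<or> u = a + ?l - ?l'"
      using par[OF u] by blast
    obtain b where b: "b \<in> P n" "b \<le> v" "v + ?l' \<le> b + ?l" "v = b \<or> v = b + ?l - ?l'"
      using par[OF v] by blast
    show ?thesis
    proof (cases "a = b")
      case True
      then have "(u = a \<and> v = a + ?l - ?l') \<or> (v = a \<and> u = a + ?l - ?l')" using a b uv by auto
      then show ?thesis using rec rp by auto
    next
      case False
      then have "?l < \<bar>a - b\<bar>" using sep a b by auto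
      then have ab: "?l < a - b \<or> ?l < b - a" by arith
      then have "?l' < u - v \<or> ?l' < v - u" using a b lp' by linarith
      then show ?thesis by arith
    qed
  qed
  have bnd': "0 \<le> u \<and> u + ?l' \<le> M" if u: "u \<in> P (Suc n)" for u
    using par[OF u] bnd by force
  have fin': "finite (P (Suc n))" using fin by simp
  show ?case unfolding inv_def
  proof (intro conjI ballI impI)
    show "finite (P (Suc n))" by (rule fin')
    show "{0..M} - removed (Suc n) = (\<Union>a\<in>P (Suc n). {a..a+?l'})" by (rule eq')
  next
    fix a assume "a \<in> P (Suc n)"
    then show "0 \<le> a" "a + ?l' \<le> M" using bnd' by auto
  next
    fix a b assume "a \<in> P (Suc n)" "b \<in> P (Suc n)" "a \<noteq> b"
    then show "?l' < \<bar>a - b\<bar>" by (rule sep')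
  qed
qed



lemma P_fin: "finite (P n)" using inv_all[of n] unfolding inv_def by auto
lemma P_bnd: "a \<in> P n \<Longrightarrow> 0 \<le> a \<and> a + ell n \<le> M" using inv_all[of n] unfolding inv_def by auto
lemma P_sep: "a \<in> P n \<Longrightarrow> b \<in> P n \<Longrightarrow> a \<noteq> b \<Longrightarrow> ell n < \<bar>a - b\<bar>"
  using inv_all[of n] unfolding inv_def by auto
lemma P_eq: "{0..M} - removed n = (\<Union>a\<in>P n. {a..a+ell n})"
  using inv_all[of n] unfolding inv_def by auto

lemma interval_disj:
  assumes "a \<in> P n" "b \<in> P n" "x \<in> {a..a+ell n}" "x \<in> {b..b+ell n}"
  shows "a = b"
proof (rule ccontr)
  assume "a \<noteq> b"
  then have "ell n < \<bar>a - b\<bar>" using P_sep assms by auto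
  then have "ell n < a - b \<or> ell n < b - a" by arith
  then show False using assms(3,4) by auto
qed

lemma Jfam_Suc: "Jfam (Suc n) = (\<lambda>a. ball (a + ell n / 2) (rad (Suc n))) ` P n"
  unfolding Jfam_def using IA_lemma[OF inv_all] by simp
lemma removed_Suc': "removed (Suc n) = removed n \<union> \<Union>(Jfam (Suc n))"
  unfolding Jfam_def by simp
lemma removed_mono: "m \<le> n \<Longrightarrow> removed m \<subseteq> removed n"
proof (induction n rule: dec_induct)
  case base then show ?case by simp
next
  case (step k) then show ?case by auto
qed
lemma allJ_iff: "J \<in> allJ \<longleftrightarrow> (\<exists>n. J \<in> Jfam (Suc n))"
proof
  assume "J \<in> allJ"
  then obtain n where "n \<ge> 1" "J \<in> Jfam n" unfolding allJ_def by auto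
  then show "\<exists>n. J \<in> Jfam (Suc n)" by (intro exI[of _ "n - 1"]) simp
next
  assume "\<exists>n. J \<in> Jfam (Suc n)"
  then obtain n where "J \<in> Jfam (Suc n)" by blast
  moreover have "Suc n \<in> {1..}" by simp
  ultimately show "J \<in> allJ" unfolding allJ_def by blast
qed

lemma ball_sub: "ball (a + ell n / 2) (rad (Suc n)) \<subseteq> {a..a+ell n}"
proof
  fix x assume "x \<in> ball (a + ell n / 2) (rad (Suc n))"
  then have x: "a + ell n / 2 - rad (Suc n) < x" "x < a + ell n / 2 + rad (Suc n)"
    unfolding in_ball_real by auto
  have "a \<le> x" "x \<le> a + ell n" using x ell_rec[of n] rad_pos[of "Suc n"] ell_pos[of "Suc n"] by linarith+
  then show "x \<in> {a..a+ell n}" by simp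
qed

lemma Jfam_sub_removed: "J \<in> Jfam (Suc n) \<Longrightarrow> J \<subseteq> removed (Suc n)"
  unfolding removed_Suc' by blast
lemma Jfam_sub_comp:
  assumes "J \<in> Jfam (Suc n)"
  shows "J \<subseteq> {0..M} - removed n"
proof -
  obtain a where a: "a \<in> P n" "J = ball (a + ell n / 2) (rad (Suc n))"
    using assms unfolding Jfam_Suc by blast
  have "J \<subseteq> {a..a+ell n}" unfolding a(2) by (rule ball_sub)
  also have "\<dots> \<subseteq> (\<Union>a\<in>P n. {a..a+ell n})" using a(1) by (rule UN_upper)
  finally show ?thesis unfolding P_eq .
qed

lemma J_disj:
  assumes J: "J \<in> allJ" and J': "J' \<in> allJ" and x: "x \<in> J" "x \<in> J'"
  shows "J = J'"
proof -
  obtain n where n: "J \<in> Jfam (Suc n)" using J unfolding allJ_iff by blast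
  obtain m where m: "J' \<in> Jfam (Suc m)" using J' unfolding allJ_iff by blast
  have lt: False if "J \<in> Jfam (Suc n)" "J' \<in> Jfam (Suc m)" "n < m" "x \<in> J" "x \<in> J'" for J J' n m
  proof -
    have "x \<in> removed (Suc n)" using Jfam_sub_removed[OF that(1)] that(4) by blast
    moreover have "removed (Suc n) \<subseteq> removed m" using removed_mono[of "Suc n" m] that(3) by simp
    ultimately have "x \<in> removed m" by blast
    moreover have "x \<notin> removed m" using Jfam_sub_comp[OF that(2)] that(5) by blast
    ultimately show False by blast
  qed
  have nm: "n = m"
  proof (rule ccontr)
    assume "n \<noteq> m"
    then have "n < m \<or> m < n" by arith
    then show False
    proof
      assume "n < m" then show False by (rule lt[OF n m _ x(1) x(2)])
    next
      assume "m < n" then show False by (rule lt[OF m n _ x(2) x(1)])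
    qed
  qed
  obtain a where a: "a \<in> P n" "J = ball (a + ell n / 2) (rad (Suc n))" using n unfolding Jfam_Suc by blast
  obtain b where b: "b \<in> P n" "J' = ball (b + ell n / 2) (rad (Suc n))" using m unfolding nm[symmetric] Jfam_Suc by blast
  have xa: "x \<in> {a..a+ell n}" using x(1) ball_sub[of a n] unfolding a(2) by blast
  have xb: "x \<in> {b..b+ell n}" using x(2) ball_sub[of b n] unfolding b(2) by blast
  have "a = b" by (rule interval_disj[OF a(1) b(1) xa xb])
  then show ?thesis using a b by simp
qed

lemma allJ_form: "J \<in> allJ \<Longrightarrow> \<exists>n a. a \<in> P n \<and> J = ball (a + ell n / 2) (rad (Suc n))"
  unfolding allJ_iff Jfam_Suc by blast

definition T :: "real \<Rightarrow> real \<Rightarrow> real \<Rightarrow> real" where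
  "T c r x = 4 / sqrt (2*r) * (r - \<bar>x - c\<bar>)"

lemma g_tent:
  assumes J: "ball c r \<in> allJ" and r: "r > 0" and x: "x \<in> ball c r"
  shows "g x = T c r x"
proof -
  have ex: "\<exists>J\<in>allJ. x \<in> J" using J x by blast
  define J0 where "J0 = (SOME J. J \<in> allJ \<and> x \<in> J)"
  have J0: "J0 \<in> allJ \<and> x \<in> J0" unfolding J0_def by (rule someI_ex) (use ex in blast)
  have J0e: "J0 = ball c r" using J0 J x by (intro J_disj[of J0 "ball c r" x]) auto
  have "g x = 4 / sqrt (measure lebesgue J0) * infdist x (frontier J0)"
    unfolding g_def J0_def[symmetric] using ex by (simp add: Let_def)
  also have "\<dots> = 4 / sqrt (2*r) * min (dist x (c-r)) (dist x (c+r))"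
  proof -
    have m: "measure lebesgue J0 = 2*r" unfolding J0e by (rule meas_ball[OF r])
    have fr: "frontier J0 = {c-r, c+r}" unfolding J0e using r by (simp add: sphere_real)
    show ?thesis unfolding m fr infdist2 ..
  qed
  also have "min (dist x (c-r)) (dist x (c+r)) = r - \<bar>x - c\<bar>"
    using x unfolding in_ball_real dist_real_def min_def by (auto simp: abs_if split: if_splits)
  finally show ?thesis unfolding T_def .
qed

lemma g_out: "x \<notin> \<Union>allJ \<Longrightarrow> g x = 0"
  unfolding g_def by auto

lemma g_cases:
  "(x \<notin> \<Union>allJ \<and> g x = 0) \<or> (\<exists>c r. ball c r \<in> allJ \<and> r > 0 \<and> x \<in> ball c r \<and> g x = T c r x)"
proof (cases "x \<in> \<Union>allJ")
  case True
  then obtain J where J: "J \<in> allJ" "x \<in> J" by blast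
  then obtain n a where Jeq: "J = ball (a + ell n / 2) (rad (Suc n))" using allJ_form by blast
  define c where "c = a + ell n / 2"
  define r where "r = rad (Suc n)"
  have cr: "J = ball c r" "r > 0" unfolding c_def r_def using Jeq rad_pos by auto
  have J': "ball c r \<in> allJ" "x \<in> ball c r" using J cr(1) by auto
  have "g x = T c r x" by (rule g_tent[OF J'(1) cr(2) J'(2)])
  then have "ball c r \<in> allJ \<and> r > 0 \<and> x \<in> ball c r \<and> g x = T c r x" using J' cr by auto
  then show ?thesis by blast
qed (simp add: g_out)

lemma T_nonneg: "x \<in> ball c r \<Longrightarrow> 0 \<le> T c r x"
  unfolding T_def in_ball_real by (auto simp: abs_if)

lemma T_le:
  assumes r: "r > 0" and x: "x \<in> ball c r"
  shows "T c r x \<le> 2 * sqrt (2*r)"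
proof -
  define s where "s = sqrt (2*r)"
  have s: "s > 0" "s * s = 2*r" unfolding s_def using r by auto
  have "T c r x = 4 / s * (r - \<bar>x - c\<bar>)" unfolding T_def s_def ..
  also have "\<dots> \<le> 4 / s * r" using s by (intro mult_left_mono) auto
  also have "\<dots> = 2 * (s * s) / s" using s(2) by simp
  also have "\<dots> = 2 * s" using s(1) by simp
  finally show ?thesis unfolding s_def .
qed

lemma T_near:
  assumes r: "r > 0" and x: "x \<in> ball c r" and y: "y \<notin> ball c r"
  shows "T c r x \<le> 4 * sqrt \<bar>x - y\<bar>"
proof -
  define s where "s = sqrt (2*r)"
  define d where "d = r - \<bar>x - c\<bar>"
  have s: "s > 0" "s * s = 2*r" unfolding s_def using r by auto
  have d: "0 < d" "d \<le> r" "d \<le> \<bar>x - y\<bar>"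
    using x y unfolding d_def in_ball_real by (auto simp: abs_if)
  have d0: "0 \<le> d" using d(1) by linarith
  have "sqrt d \<le> s" unfolding s_def using d by (intro real_sqrt_le_mono) auto
  then have "sqrt d * sqrt d \<le> sqrt d * s" by (rule mult_left_mono) (simp add: d0)
  moreover have "sqrt d * sqrt d = d" using d0 by (metis real_sqrt_mult_self abs_of_nonneg)
  ultimately have "d \<le> sqrt d * s" by simp
  then have "d / s \<le> sqrt d" using s(1) by (simp add: divide_le_eq)
  also have "sqrt d \<le> sqrt \<bar>x - y\<bar>" using d(3) by simp
  finally have "d / s \<le> sqrt \<bar>x - y\<bar>" .
  moreover have "T c r x = 4 * (d / s)" unfolding T_def s_def d_def by simp
  ultimately show ?thesis by simp
qed

lemma T_same:
  assumes r: "r > 0" and x: "x \<in> ball c r" and y: "y \<in> ball c r"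
  shows "\<bar>T c r x - T c r y\<bar> \<le> 4 * sqrt \<bar>x - y\<bar>"
proof -
  define s where "s = sqrt (2*r)"
  define u where "u = sqrt \<bar>x - y\<bar>"
  have s: "s > 0" "s * s = 2*r" unfolding s_def using r by auto
  have u0: "u \<ge> 0" unfolding u_def by simp
  have uu: "u * u = \<bar>x - y\<bar>" unfolding u_def by simp
  have A: "\<bar>T c r x - T c r y\<bar> \<le> 4 / s * \<bar>x - y\<bar>"
  proof -
    have e: "T c r x - T c r y = 4 / s * (\<bar>y - c\<bar> - \<bar>x - c\<bar>)"
      unfolding T_def s_def[symmetric] by (simp add: right_diff_distrib)
    have a1: "\<bar>T c r x - T c r y\<bar> = \<bar>4 / s\<bar> * \<bar>\<bar>y - c\<bar> - \<bar>x - c\<bar>\<bar>" unfolding e by (rule abs_mult)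
    have a2: "\<bar>4 / s\<bar> = 4 / s" using s(1) by simp
    have a3: "\<bar>\<bar>y - c\<bar> - \<bar>x - c\<bar>\<bar> \<le> \<bar>x - y\<bar>" by arith
    have "\<bar>4 / s\<bar> * \<bar>\<bar>y - c\<bar> - \<bar>x - c\<bar>\<bar> \<le> 4 / s * \<bar>x - y\<bar>"
      unfolding a2 using a3 s(1) by (intro mult_left_mono) auto
    then show ?thesis unfolding a1 .
  qed
  have B: "\<bar>T c r x - T c r y\<bar> \<le> 2 * s"
  proof -
    have "T c r x \<le> 2 * s" "T c r y \<le> 2 * s" using T_le[OF r x] T_le[OF r y] unfolding s_def by auto
    moreover have "0 \<le> T c r x" "0 \<le> T c r y" using T_nonneg[OF x] T_nonneg[OF y] by auto
    ultimately show ?thesis unfolding abs_le_iff by (intro conjI) linarith+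
  qed
  show ?thesis
  proof (cases "u \<le> s")
    case True
    have "u * u \<le> u * s" using True u0 by (rule mult_left_mono)
    then have "\<bar>x - y\<bar> / s \<le> u" using s(1) unfolding uu[symmetric] by (simp add: divide_le_eq)
    then have "4 / s * \<bar>x - y\<bar> \<le> 4 * u" by simp
    then show ?thesis using A unfolding u_def by linarith
  next
    case False
    then show ?thesis using B u0 unfolding u_def by linarith
  qed
qed

lemma g_nonneg: "0 \<le> g x"
  using g_cases[of x] T_nonneg by auto

lemma g_le_if_not_same:
  assumes "\<forall>J\<in>allJ. x \<in> J \<longrightarrow> y \<notin> J"
  shows "g x \<le> 4 * sqrt \<bar>x - y\<bar>"
  using g_cases[of x]
proof
  assume "x \<notin> \<Union>allJ \<and> g x = 0"
  then show ?thesis by simp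
next
  assume "\<exists>c r. ball c r \<in> allJ \<and> r > 0 \<and> x \<in> ball c r \<and> g x = T c r x"
  then obtain c r where cr: "ball c r \<in> allJ" "r > 0" "x \<in> ball c r" "g x = T c r x" by blast
  have yn: "y \<notin> ball c r" using assms cr(1,3) by blast
  have "T c r x \<le> 4 * sqrt \<bar>x - y\<bar>" by (rule T_near[OF cr(2) cr(3) yn])
  then show ?thesis using cr(4) by simp
qed

lemma g_holder: "\<bar>g x - g y\<bar> \<le> 8 * sqrt \<bar>x - y\<bar>"
proof (cases "\<exists>J\<in>allJ. x \<in> J \<and> y \<in> J")
  case True
  then obtain J where J: "J \<in> allJ" "x \<in> J" "y \<in> J" by blast
  then obtain n a where Jeq: "J = ball (a + ell n / 2) (rad (Suc n))" using allJ_form by blast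
  define c where "c = a + ell n / 2"
  define r where "r = rad (Suc n)"
  have cr: "J = ball c r" "r > 0" unfolding c_def r_def using Jeq rad_pos by auto
  have J': "ball c r \<in> allJ" "x \<in> ball c r" "y \<in> ball c r" using J cr(1) by auto
  have gx: "g x = T c r x" by (rule g_tent[OF J'(1) cr(2) J'(2)])
  have gy: "g y = T c r y" by (rule g_tent[OF J'(1) cr(2) J'(3)])
  have "\<bar>T c r x - T c r y\<bar> \<le> 4 * sqrt \<bar>x - y\<bar>" by (rule T_same[OF cr(2) J'(2) J'(3)])
  moreover have "0 \<le> sqrt \<bar>x - y\<bar>" by simp
  ultimately show ?thesis unfolding gx gy by linarith
next
  case False
  then have n1: "\<forall>J\<in>allJ. x \<in> J \<longrightarrow> y \<notin> J" and n2: "\<forall>J\<in>allJ. y \<in> J \<longrightarrow> x \<notin> J" by blast+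
  have A1: "g x \<le> 4 * sqrt \<bar>x - y\<bar>" by (rule g_le_if_not_same[OF n1])
  have A2': "g y \<le> 4 * sqrt \<bar>y - x\<bar>" by (rule g_le_if_not_same[OF n2])
  have "\<bar>y - x\<bar> = \<bar>x - y\<bar>" by (rule abs_minus_commute)
  then have A: "g x \<le> 4 * sqrt \<bar>x - y\<bar>" "g y \<le> 4 * sqrt \<bar>x - y\<bar>" using A1 A2' by auto
  show ?thesis unfolding abs_le_iff
    using A g_nonneg[of x] g_nonneg[of y] by (intro conjI) linarith+
qed

lemma g_cont: "continuous_on S g"
proof -
  have "continuous_on UNIV g"
    unfolding continuous_on_iff
  proof (intro ballI allI impI)
    fix x :: real and e :: real assume e: "e > 0"
    show "\<exists>d>0. \<forall>x'\<in>UNIV. dist x' x < d \<longrightarrow> dist (g x') (g x) < e"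
    proof (intro exI[of _ "(e/8)^2"] conjI ballI impI)
      show "(e/8)^2 > 0" using e by simp
      fix x' assume "dist x' x < (e/8)^2"
      then have "sqrt \<bar>x' - x\<bar> < sqrt ((e/8)^2)" unfolding dist_real_def
        using real_sqrt_less_mono by blast
      then have "sqrt \<bar>x' - x\<bar> < e/8" using e by simp
      then show "dist (g x') (g x) < e" unfolding dist_real_def using g_holder[of x' x] by linarith
    qed
  qed
  then show ?thesis using continuous_on_subset by blast
qed

lemma g_int: "g integrable_on {a..b}"
  by (rule integrable_continuous_real) (rule g_cont)

lemma f_diff: "0 \<le> x \<Longrightarrow> x \<le> y \<Longrightarrow> f y - f x = integral {x..y} g"
  unfolding f_def using Henstock_Kurzweil_Integration.integral_combine[OF _ _ g_int, of 0 x y] by simp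

lemma f_deriv: "x \<in> {0..M} \<Longrightarrow> (f has_real_derivative g x) (at x within {0..M})"
  unfolding has_real_derivative_iff_has_vector_derivative f_def[abs_def]
  by (rule integral_has_vector_derivative) (rule g_cont)

lemma f_cont: "continuous_on {0..M} f"
  using f_deriv DERIV_continuous_on by blast


lemma T_integral:
  assumes r: "r > 0"
  shows "(T c r has_integral (4 / sqrt (2*r) * r^2)) {c-r..c+r}"
proof -
  define k where "k = 4 / sqrt (2*r)"
  have L0: "((\<lambda>x. k * (x - c + r)) has_integral
      ((\<lambda>x. k * (x - c + r)^2 / 2) c - (\<lambda>x. k * (x - c + r)^2 / 2) (c - r))) {c-r..c}"
  proof (rule fundamental_theorem_of_calculus)
    show "c - r \<le> c" using r by simp
    fix x :: real
    have "((\<lambda>x. k * (x - c + r)^2 / 2) has_real_derivative k * (x - c + r)) (at x within {c-r..c})"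
      by (auto intro!: derivative_eq_intros simp: field_simps)
    then show "((\<lambda>x. k * (x - c + r)^2 / 2) has_vector_derivative k * (x - c + r)) (at x within {c-r..c})"
      by (simp add: has_real_derivative_iff_has_vector_derivative)
  qed
  have L0': "((\<lambda>x. k * (x - c + r)) has_integral (k * r^2 / 2)) {c-r..c}" using L0 by simp
  have L: "(T c r has_integral (k * r^2 / 2)) {c-r..c}"
    by (rule has_integral_spike_finite[where S="{}" and f="\<lambda>x. k * (x - c + r)", OF _ _ L0'])
       (auto simp: T_def k_def abs_if)
  have R0: "((\<lambda>x. k * (c + r - x)) has_integral
      ((\<lambda>x. - k * (c + r - x)^2 / 2) (c + r) - (\<lambda>x. - k * (c + r - x)^2 / 2) c)) {c..c+r}"
  proof (rule fundamental_theorem_of_calculus)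
    show "c \<le> c + r" using r by simp
    fix x :: real
    have "((\<lambda>x. - k * (c + r - x)^2 / 2) has_real_derivative k * (c + r - x)) (at x within {c..c+r})"
      by (auto intro!: derivative_eq_intros simp: field_simps)
    then show "((\<lambda>x. - k * (c + r - x)^2 / 2) has_vector_derivative k * (c + r - x)) (at x within {c..c+r})"
      by (simp add: has_real_derivative_iff_has_vector_derivative)
  qed
  have R0': "((\<lambda>x. k * (c + r - x)) has_integral (k * r^2 / 2)) {c..c+r}" using R0 by simp
  have R: "(T c r has_integral (k * r^2 / 2)) {c..c+r}"
    by (rule has_integral_spike_finite[where S="{}" and f="\<lambda>x. k * (c + r - x)", OF _ _ R0'])
       (auto simp: T_def k_def abs_if)
  have "(T c r has_integral (k * r^2 / 2 + k * r^2 / 2)) {c-r..c+r}"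
    by (rule has_integral_combine[OF _ _ L R]) (use r in auto)
  then show ?thesis unfolding k_def by simp
qed

lemma gap_int:
  assumes a: "a \<in> P n"
  shows "f (a + ell n / 2 + rad (Suc n)) - f (a + ell n / 2 - rad (Suc n)) = 1 / 3^(Suc n)"
proof -
  let ?c = "a + ell n / 2" and ?r = "rad (Suc n)"
  have r: "?r > 0" by (rule rad_pos)
  have J0: "ball ?c ?r \<in> Jfam (Suc n)" unfolding Jfam_Suc using a by blast
  have J: "ball ?c ?r \<in> allJ" unfolding allJ_iff using J0 by blast
  have lo: "0 \<le> ?c - ?r" using P_bnd[OF a] ell_rec[of n] ell_pos[of "Suc n"] by linarith
  have I: "(g has_integral (4 / sqrt (2*?r) * ?r^2)) {?c-?r..?c+?r}"
    by (rule has_integral_spike_finite[where S="{?c-?r, ?c+?r}" and f="T ?c ?r", OF _ _ T_integral[OF r]])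
       (auto simp: dist_real_def abs_if intro!: g_tent[OF J r])
  define q where "q = lam^(Suc n)"
  define s where "s = sqrt q"
  have q: "q > 0" unfolding q_def using lam_pos by simp
  have s: "s > 0" "s^2 = q" "s^3 = 3^(Suc n)" unfolding s_def q_def
    using q sqrt_lam_pow[of "Suc n"] lam_pos by (auto simp: q_def)
  have r2: "?r = 1 / (2*q)" unfolding rad_def q_def ..
  have sq: "sqrt (2*?r) = 1 / s" unfolding r2 s_def using q by (simp add: real_sqrt_divide)
  have r2': "?r = 1 / (2 * s^2)" using r2 s(2) by simp
  have "4 / sqrt (2*?r) * ?r^2 = 4 * s * ?r^2" unfolding sq by simp
  also have "\<dots> = 4 * s * (1 / (2 * s^2))^2" by (subst r2') (rule refl)
  also have "\<dots> = 1 / s^3" using s(1) by (simp add: field_simps eval_nat_numeral)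
  also have "\<dots> = 1 / 3^(Suc n)" using s(3) by simp
  finally have v: "4 / sqrt (2*?r) * ?r^2 = 1 / 3^(Suc n)" .
  have "f (?c + ?r) - f (?c - ?r) = integral {?c-?r..?c+?r} g"
    using f_diff[OF lo] r by simp
  also have "\<dots> = 1 / 3^(Suc n)" using integral_unique[OF I] v by simp
  finally show ?thesis .
qed

lemma g_level_bound:
  assumes a: "a \<in> P n" and x: "x \<in> {a..a+ell n}"
  shows "g x \<le> 2 / sqrt (lam^n)"
proof (cases "x \<in> \<Union>allJ")
  case False
  then show ?thesis using g_out lam_pos by simp
next
  case True
  then obtain J where J: "J \<in> allJ" "x \<in> J" by blast
  then obtain m where m: "J \<in> Jfam (Suc m)" unfolding allJ_iff by blast
  then obtain b where b: "b \<in> P m" "J = ball (b + ell m / 2) (rad (Suc m))" unfolding Jfam_Suc by blast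
  have "x \<in> (\<Union>a\<in>P n. {a..a+ell n})" using a x by blast
  then have "x \<in> {0..M} - removed n" unfolding P_eq .
  then have xn: "x \<notin> removed n" by blast
  have mn: "n \<le> m"
  proof (rule ccontr)
    assume "\<not> n \<le> m"
    then have "removed (Suc m) \<subseteq> removed n" by (intro removed_mono) simp
    then show False using Jfam_sub_removed[OF m] J(2) xn by blast
  qed
  have Jb: "ball (b + ell m / 2) (rad (Suc m)) \<in> allJ" "x \<in> ball (b + ell m / 2) (rad (Suc m))"
    using J b(2) by auto
  have "g x = T (b + ell m / 2) (rad (Suc m)) x" by (rule g_tent[OF Jb(1) rad_pos Jb(2)])
  also have "\<dots> \<le> 2 * sqrt (2 * rad (Suc m))" by (rule T_le[OF rad_pos Jb(2)])
  also have "2 * rad (Suc m) = 1 / lam^(Suc m)" unfolding rad_def using lam_pos by simp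
  also have "1 / lam^(Suc m) \<le> 1 / lam^n"
    using lam_pos lam_gt2 mn by (intro divide_left_mono power_increasing) auto
  finally have "g x \<le> 2 * sqrt (1 / lam^n)" by simp
  then show ?thesis by (simp add: real_sqrt_divide)
qed

lemma D_bound:
  assumes a: "a \<in> P n"
  shows "0 \<le> f (a + ell n) - f a \<and> f (a + ell n) - f a \<le> 2 * M / 3^n"
proof -
  have a0: "0 \<le> a" using P_bnd a by auto
  have e: "f (a + ell n) - f a = integral {a..a+ell n} g" using f_diff a0 ell_pos[of n] by simp
  have lo: "0 \<le> integral {a..a+ell n} g" by (rule integral_nonneg[OF g_int]) (simp add: g_nonneg)
  have "integral {a..a+ell n} g \<le> integral {a..a+ell n} (\<lambda>x. 2 / sqrt (lam^n))"
    by (rule integral_le[OF g_int]) (auto intro: g_level_bound[OF a])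
  also have "\<dots> = ell n * (2 / sqrt (lam^n))" using ell_pos[of n] by simp
  also have "\<dots> = 2 * M / 3^n"
  proof -
    define s where "s = sqrt (lam^n)"
    have s: "s > 0" "s^2 = lam^n" "s^3 = 3^n" unfolding s_def using lam_pos sqrt_lam_pow[of n]
      by (auto simp: less_imp_le)
    have "ell n * (2 / sqrt (lam^n)) = M / s^2 * (2 / s)" unfolding ell_def s_def[symmetric] s(2) ..
    also have "\<dots> = 2 * M / s^3" using s(1) by (simp add: field_simps eval_nat_numeral)
    finally show ?thesis using s(3) by simp
  qed
  finally show ?thesis using e lo by simp
qed

lemma D_split:
  assumes a: "a \<in> P n"
  shows "f (a + ell n) - f a = (f (a + ell (Suc n)) - f a) + 1/3^(Suc n)
     + (f ((a + ell n - ell (Suc n)) + ell (Suc n)) - f (a + ell n - ell (Suc n)))"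
proof -
  have e1: "a + ell n / 2 + rad (Suc n) = a + ell n - ell (Suc n)" using ell_rec[of n] by linarith
  have e2: "a + ell n / 2 - rad (Suc n) = a + ell (Suc n)" using ell_rec[of n] by linarith
  have G: "f (a + ell n - ell (Suc n)) - f (a + ell (Suc n)) = 1 / 3^(Suc n)"
    using gap_int[OF a] unfolding e1 e2 .
  have e3: "(a + ell n - ell (Suc n)) + ell (Suc n) = a + ell n" by simp
  show ?thesis unfolding e3 using G by linarith
qed

lemma D_err:
  "\<forall>n a. a \<in> P n \<longrightarrow> \<bar>f (a + ell n) - f a - 1/3^n\<bar> \<le> (1 + 2*M) * 2^k / 3^(n+k)"
proof (induction k)
  case 0
  show ?case
  proof (intro allI impI)
    fix n a assume a: "a \<in> P n"
    have B: "0 \<le> f (a + ell n) - f a" "f (a + ell n) - f a \<le> 2 * M / 3^n"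
      using D_bound[OF a] by auto
    have p: "0 < 1 / (3::real)^n" by simp
    have M0: "0 < 2 * M / 3^n" using M_pos by simp
    have e: "(1 + 2*M) * 2^0 / 3^(n+0) = 2 * M / 3^n + 1 / 3^n" by (simp add: field_simps)
    show "\<bar>f (a + ell n) - f a - 1/3^n\<bar> \<le> (1 + 2*M) * 2^0 / 3^(n+0)"
      unfolding e abs_le_iff using B p M0 by linarith
  qed
next
  case (Suc k)
  show ?case
  proof (intro allI impI)
    fix n a assume a: "a \<in> P n"
    let ?a' = "a + ell n - ell (Suc n)"
    let ?E = "(1 + 2*M) * 2^k / 3^(Suc n + k)"
    have c1: "a \<in> P (Suc n)" "?a' \<in> P (Suc n)" using a by auto
    have E1: "\<bar>f (a + ell (Suc n)) - f a - 1/3^(Suc n)\<bar> \<le> ?E" using Suc.IH c1(1) by blast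
    have E2: "\<bar>f (?a' + ell (Suc n)) - f ?a' - 1/3^(Suc n)\<bar> \<le> ?E" using Suc.IH c1(2) by blast
    have S: "f (a + ell n) - f a - 1/3^n =
        (f (a + ell (Suc n)) - f a - 1/3^(Suc n)) + (f (?a' + ell (Suc n)) - f ?a' - 1/3^(Suc n))"
      using D_split[OF a] by simp
    have "\<bar>f (a + ell n) - f a - 1/3^n\<bar> \<le> ?E + ?E"
      unfolding S by (rule order_trans[OF abs_triangle_ineq add_mono[OF E1 E2]])
    also have "?E + ?E = (1 + 2*M) * 2^(Suc k) / 3^(n + Suc k)" by simp
    finally show "\<bar>f (a + ell n) - f a - 1/3^n\<bar> \<le> (1 + 2*M) * 2^(Suc k) / 3^(n + Suc k)" .
  qed
qed

lemma D_exact: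
  assumes a: "a \<in> P n"
  shows "f (a + ell n) - f a = 1/3^n"
proof (rule ccontr)
  assume ne: "f (a + ell n) - f a \<noteq> 1/3^n"
  define e where "e = \<bar>f (a + ell n) - f a - 1/3^n\<bar>"
  have e0: "e > 0" using ne unfolding e_def by simp
  have "(\<lambda>k. (1 + 2*M) / 3^n * (2/3::real)^k) \<longlonglongrightarrow> (1 + 2*M) / 3^n * 0"
    by (intro tendsto_mult tendsto_const LIMSEQ_power_zero) simp
  then have "\<forall>\<^sub>F k in sequentially. (1 + 2*M) / 3^n * (2/3::real)^k < e"
    using e0 by (intro order_tendstoD(2)) auto
  then obtain k where k: "(1 + 2*M) / 3^n * (2/3::real)^k < e"
    by (auto simp: eventually_sequentially)
  have "(1 + 2*M) * 2^k / 3^(n+k) = (1 + 2*M) / 3^n * (2/3::real)^k"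
    by (simp add: power_add power_divide)
  then have "e \<le> (1 + 2*M) / 3^n * (2/3::real)^k" using D_err[of k] a unfolding e_def by metis
  then show False using k by simp
qed

lemma f0: "f 0 = 0" unfolding f_def by simp

lemma child_val:
  assumes a: "a \<in> P n"
  shows "f (a + ell n - ell (Suc n)) = f a + 2/3^(Suc n)"
proof -
  have c: "a + ell n - ell (Suc n) \<in> P (Suc n)" using a by simp
  have "f ((a + ell n - ell (Suc n)) + ell (Suc n)) - f (a + ell n - ell (Suc n)) = 1/3^(Suc n)"
    by (rule D_exact[OF c])
  then have A: "f (a + ell n) - f (a + ell n - ell (Suc n)) = 1/3^(Suc n)" by simp
  have B: "f (a + ell n) - f a = 3 * (1/3^(Suc n))" using D_exact[OF a] by simp
  show ?thesis using A B by simp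
qed

lemma cover: "\<forall>t\<in>{0..2}. \<exists>a\<in>P N. \<exists>b\<in>P N. f a + f b \<le> t \<and> t \<le> f a + f b + 2/3^N"
proof (induction N)
  case 0
  show ?case using f0 by auto
next
  case (Suc N)
  show ?case
  proof
    fix t :: real assume t: "t \<in> {0..2}"
    obtain a b where ab: "a \<in> P N" "b \<in> P N" "f a + f b \<le> t" "t \<le> f a + f b + 2/3^N"
      using Suc.IH t by blast
    define d :: real where "d = 1/3^(Suc N)"
    have dd: "2/3^N = 6 * d" unfolding d_def by simp
    have d2: "2/3^(Suc N) = 2 * d" unfolding d_def by simp
    let ?a' = "a + ell N - ell (Suc N)" and ?b' = "b + ell N - ell (Suc N)"
    have va: "f ?a' = f a + 2 * d" using child_val[OF ab(1)] unfolding d_def by simp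
    have vb: "f ?b' = f b + 2 * d" using child_val[OF ab(2)] unfolding d_def by simp
    have mem: "a \<in> P (Suc N)" "b \<in> P (Suc N)" "?a' \<in> P (Suc N)" "?b' \<in> P (Suc N)" using ab by auto
    show "\<exists>a\<in>P (Suc N). \<exists>b\<in>P (Suc N). f a + f b \<le> t \<and> t \<le> f a + f b + 2/3^(Suc N)"
      unfolding d2
    proof (cases "t \<le> f a + f b + 2 * d")
      case True
      then show "\<exists>a\<in>P (Suc N). \<exists>b\<in>P (Suc N). f a + f b \<le> t \<and> t \<le> f a + f b + 2 * d"
        using mem ab by blast
    next
      case False
      show "\<exists>a\<in>P (Suc N). \<exists>b\<in>P (Suc N). f a + f b \<le> t \<and> t \<le> f a + f b + 2 * d"
      proof (cases "t \<le> f a + f b + 4 * d")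
        case True
        then show ?thesis using mem False va by (intro bexI[of _ ?a'] bexI[of _ b]) auto
      next
        case False2: False
        then show ?thesis using mem False va vb ab(4) unfolding dd
          by (intro bexI[of _ ?a'] bexI[of _ ?b']) auto
      qed
    qed
  qed
qed


lemma A_closed: "closed ({0..M} - removed N)"
  unfolding P_eq using P_fin by (intro closed_UN) auto

lemma F_cont: "continuous_on ({0..M} \<times> {0..M}) F"
proof -
  have c1: "continuous_on ({0..M} \<times> {0..M}) (\<lambda>p. f (fst p))"
    by (rule continuous_on_compose2[OF f_cont continuous_on_fst[OF continuous_on_id]]) auto
  have c2: "continuous_on ({0..M} \<times> {0..M}) (\<lambda>p. f (snd p))"
    by (rule continuous_on_compose2[OF f_cont continuous_on_snd[OF continuous_on_id]]) auto
  have e: "F = (\<lambda>p. f (fst p) + f (snd p))" by (rule ext) (simp add: F_def)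
  show ?thesis unfolding e by (rule continuous_on_add[OF c1 c2])
qed

lemma not_removed_g0:
  assumes "\<And>N. x \<notin> removed N"
  shows "g x = 0"
proof (rule g_out)
  show "x \<notin> \<Union>allJ"
  proof
    assume "x \<in> \<Union>allJ"
    then obtain J where J: "J \<in> allJ" "x \<in> J" by blast
    then obtain n where "J \<in> Jfam (Suc n)" unfolding allJ_iff by blast
    then have "x \<in> removed (Suc n)" using Jfam_sub_removed J(2) by blast
    then show False using assms by blast
  qed
qed

theorem mainTheorem3:
  shows "\<exists>DF :: real \<times> real \<Rightarrow> real \<times> real.
     (\<forall>p \<in> {0..M} \<times> {0..M}.
        (F has_derivative (\<lambda>h. DF p \<bullet> h)) (at p within {0..M} \<times> {0..M})) \<and>
     (\<exists>C. \<forall>p \<in> {0..M} \<times> {0..M}. \<forall>q \<in> {0..M} \<times> {0..M}.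
        norm (DF p - DF q) \<le> C * dist p q powr (1/2)) \<and>
     (\<forall>t \<in> {0..2}. \<exists>p \<in> {0..M} \<times> {0..M}. F p = t \<and> DF p = 0)"
proof -
  define S where "S = {0..M} \<times> {0..M}"
  define DF where "DF p = (g (fst p), g (snd p))" for p :: "real \<times> real"
  have deriv: "(F has_derivative (\<lambda>h. DF p \<bullet> h)) (at p within S)" if p: "p \<in> S" for p
  proof -
    have f1: "(f has_derivative (\<lambda>h. g x * h)) (at x within {0..M})" if "x \<in> {0..M}" for x
      using has_field_derivative_imp_has_derivative[OF f_deriv[OF that]] .
    have d1: "((\<lambda>p. f (fst p)) has_derivative (\<lambda>h. g (fst p) * fst h)) (at p within S)"
      by (rule has_derivative_in_compose2[OF f1 _ p has_derivative_fst[OF has_derivative_ident]])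
         (auto simp: S_def)
    have d2: "((\<lambda>p. f (snd p)) has_derivative (\<lambda>h. g (snd p) * snd h)) (at p within S)"
      by (rule has_derivative_in_compose2[OF f1 _ p has_derivative_snd[OF has_derivative_ident]])
         (auto simp: S_def)
    have e1: "F = (\<lambda>p. f (fst p) + f (snd p))" by (rule ext) (simp add: F_def)
    have e2: "(\<lambda>h. DF p \<bullet> h) = (\<lambda>h. g (fst p) * fst h + g (snd p) * snd h)"
      by (rule ext) (simp add: DF_def inner_prod_def)
    show ?thesis unfolding e1 e2 by (rule has_derivative_add[OF d1 d2])
  qed
  have holder: "norm (DF p - DF q) \<le> 16 * dist p q powr (1/2)" for p q
  proof -
    have "norm (DF p - DF q) = norm (g (fst p) - g (fst q), g (snd p) - g (snd q))"
      by (simp add: DF_def)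
    also have "\<dots> \<le> norm (g (fst p) - g (fst q)) + norm (g (snd p) - g (snd q))"
      by (rule norm_Pair_le)
    also have "\<dots> = \<bar>g (fst p) - g (fst q)\<bar> + \<bar>g (snd p) - g (snd q)\<bar>" by simp
    also have "\<dots> \<le> 8 * sqrt \<bar>fst p - fst q\<bar> + 8 * sqrt \<bar>snd p - snd q\<bar>"
      by (rule add_mono[OF g_holder g_holder])
    also have "\<dots> \<le> 8 * sqrt (dist p q) + 8 * sqrt (dist p q)"
    proof -
      have "\<bar>fst p - fst q\<bar> \<le> dist p q" using dist_fst_le[of p q] by (simp add: dist_real_def)
      moreover have "\<bar>snd p - snd q\<bar> \<le> dist p q" using dist_snd_le[of p q] by (simp add: dist_real_def)
      ultimately show ?thesis by (intro add_mono mult_left_mono real_sqrt_le_mono) auto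
    qed
    also have "\<dots> = 16 * dist p q powr (1/2)" by (simp add: powr_half_sqrt)
    finally show ?thesis .
  qed
  have crit: "\<exists>p\<in>S. F p = t \<and> DF p = 0" if t: "t \<in> {0..2}" for t
  proof -
    define K where "K N = {p \<in> ({0..M} - removed N) \<times> ({0..M} - removed N). F p = t}" for N
    have Kcl: "closed (K N)" for N
    proof -
      have "continuous_on (({0..M} - removed N) \<times> ({0..M} - removed N)) F"
        by (rule continuous_on_subset[OF F_cont]) auto
      moreover have "closed (({0..M} - removed N) \<times> ({0..M} - removed N))"
        by (intro closed_Times A_closed)
      ultimately show ?thesis unfolding K_def by (rule continuous_closed_preimage_constant)
    qed
    have Kne: "K N \<noteq> {}" for N
    proof -
      obtain a b where ab: "a \<in> P N" "b \<in> P N" "f a + f b \<le> t" "t \<le> f a + f b + 2/3^N"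
        using cover[of N] t by blast
      define h where "h u = f (a + u) + f (b + u)" for u
      have ba: "0 \<le> a" "a + ell N \<le> M" using P_bnd[OF ab(1)] by auto
      have bb: "0 \<le> b" "b + ell N \<le> M" using P_bnd[OF ab(2)] by auto
      have h0: "h 0 \<le> t" unfolding h_def using ab(3) by simp
      have h1: "t \<le> h (ell N)" unfolding h_def using ab(4) D_exact[OF ab(1)] D_exact[OF ab(2)] by simp
      have ca: "continuous_on {0..ell N} (\<lambda>u. f (a + u))"
        by (rule continuous_on_compose2[OF f_cont continuous_on_add[OF continuous_on_const continuous_on_id]])
           (use ba in auto)
      have cb: "continuous_on {0..ell N} (\<lambda>u. f (b + u))"
        by (rule continuous_on_compose2[OF f_cont continuous_on_add[OF continuous_on_const continuous_on_id]])
           (use bb in auto)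
      have hc: "continuous_on {0..ell N} h" unfolding h_def[abs_def] by (rule continuous_on_add[OF ca cb])
      obtain u where u: "0 \<le> u" "u \<le> ell N" "h u = t"
        using IVT'[of h 0 t "ell N", OF h0 h1 _ hc] ell_pos[of N] by auto
      have "a + u \<in> (\<Union>a\<in>P N. {a..a+ell N})" by (rule UN_I[OF ab(1)]) (use u in simp)
      then have xa: "a + u \<in> {0..M} - removed N" unfolding P_eq .
      have "b + u \<in> (\<Union>a\<in>P N. {a..a+ell N})" by (rule UN_I[OF ab(2)]) (use u in simp)
      then have xb: "b + u \<in> {0..M} - removed N" unfolding P_eq .
      have "F (a + u, b + u) = t" using u(3) unfolding h_def F_def by simp
      then have "(a + u, b + u) \<in> K N" unfolding K_def using xa xb by simp
      then show ?thesis by blast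
    qed
    have Kmono: "K m \<subseteq> K n" if "n \<le> m" for n m
    proof -
      have "removed n \<subseteq> removed m" by (rule removed_mono[OF that])
      then show ?thesis unfolding K_def by auto
    qed
    have KS: "K N \<subseteq> S" for N unfolding K_def S_def by auto
    have "S \<inter> (\<Inter>N\<in>UNIV. K N) \<noteq> {}"
    proof (rule compact_imp_fip_image)
      show "compact S" unfolding S_def by (intro compact_Times compact_Icc)
      show "closed (K i)" if "i \<in> UNIV" for i by (rule Kcl)
      fix I' :: "nat set" assume I': "finite I'" "I' \<subseteq> UNIV"
      show "S \<inter> (\<Inter>i\<in>I'. K i) \<noteq> {}"
      proof (cases "I' = {}")
        case True
        have "(0, 0) \<in> S" unfolding S_def using M_pos by auto
        then show ?thesis using True by auto
      next
        case False
        define N where "N = Max I'"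
        have "K N \<subseteq> K i" if "i \<in> I'" for i
          using Kmono[of i N] Max_ge[OF I'(1) that] unfolding N_def by auto
        then have "K N \<subseteq> S \<inter> (\<Inter>i\<in>I'. K i)" using KS[of N] by auto
        then show ?thesis using Kne[of N] by (metis subset_empty)
      qed
    qed
    then obtain p where p: "p \<in> S" "\<And>N. p \<in> K N" by auto
    have Ft: "F p = t" using p(2)[of 0] unfolding K_def by auto
    have nr: "fst p \<notin> removed N" "snd p \<notin> removed N" for N
      using p(2)[of N] unfolding K_def by (auto simp: mem_Times_iff)
    have "g (fst p) = 0" by (rule not_removed_g0) (rule nr(1))
    moreover have "g (snd p) = 0" by (rule not_removed_g0) (rule nr(2))
    ultimately have "DF p = 0" unfolding DF_def by (simp add: zero_prod_def)
    then show ?thesis using p(1) Ft by blast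
  qed
  show ?thesis unfolding S_def[symmetric]
    using deriv holder crit by blast
qed

end
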